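(* Let $\mathcal{P}$ be an arbitrary set of primes all smaller than $\log x$, and let $S(x, \mathcal{P})$ be the number of positive integers $n \le x$ not divisible by any prime in $\mathcal{P}$. Then $$S(x,\mathcal{P}) \le (1+o(1)) \, x \exp\Big(-\sum_{p \in \mathcal{P}} \frac1p\Big)$$ as $x \to \infty$.
   Context: $\log$ is the natural logarithm. *)

theory Defs
  imports Complex_Main "HOL-Computational_Algebra.Primes"
begin

definition sieve_count :: "real \<Rightarrow> nat set \<Rightarrow> nat" where
  "sieve_count x P = card {n :: nat. 1 \<le> n \<and> real n \<le> x \<and> (\<forall>p\<in>P. \<not> p dvd n)}"

end

theory Submission imports Defs "HOL-Real_Asymp.Real_Asymp" begin

lemma base_count: assumes "x \<ge> 0"
  shows "\<bar>real (sieve_count x {}) - x\<bar> \<le> 1"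
proof -
  have key: "real n \<le> x \<longleftrightarrow> n \<le> nat \<lfloor>x\<rfloor>" for n :: nat
  proof
    assume "real n \<le> x" thus "n \<le> nat \<lfloor>x\<rfloor>" by (simp add: le_nat_floor)
  next
    assume "n \<le> nat \<lfloor>x\<rfloor>"
    hence "real n \<le> real (nat \<lfloor>x\<rfloor>)" by simp
    also have "\<dots> \<le> x" using assms by simp
    finally show "real n \<le> x" .
  qed
  have "{n::nat. 1 \<le> n \<and> real n \<le> x \<and> (\<forall>p\<in>{}. \<not> p dvd n)} = {1..nat \<lfloor>x\<rfloor>}"
    by (rule set_eqI, simp only: mem_Collect_eq atLeastAtMost_iff ball_empty) (use key in blast)
  hence "sieve_count x {} = nat \<lfloor>x\<rfloor>" by (simp add: sieve_count_def)
  moreover have "real (nat \<lfloor>x\<rfloor>) \<le> x" "x < real (nat \<lfloor>x\<rfloor>) + 1" using assms by simp_all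
  ultimately show ?thesis by linarith
qed

lemma step_count:
  assumes "finite P" "\<forall>p\<in>P. prime p" "prime q" "q \<notin> P" "x \<ge> 0"
  shows "sieve_count x (insert q P) = sieve_count x P - sieve_count (x / q) P"
proof -
  define A where "A y = {n::nat. 1 \<le> n \<and> real n \<le> y \<and> (\<forall>p\<in>P. \<not> p dvd n)}" for y
  have finA: "finite (A y)" for y
    by (rule finite_subset[of _ "{..nat \<lfloor>y\<rfloor>}"]) (auto simp: A_def le_nat_floor)
  have qpos: "q > 0" using assms prime_gt_0_nat by blast
  have B: "{n \<in> A x. q dvd n} = (\<lambda>m. q * m) ` A (x / q)"
  proof (intro equalityI subsetI)
    fix n assume n: "n \<in> {n \<in> A x. q dvd n}"
    then obtain m where m: "n = q * m" by auto
    have "m \<in> A (x / q)"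
    proof -
      have "1 \<le> m" using n m by (auto simp: A_def)
      moreover have "real m \<le> x / q" using n m qpos by (auto simp: A_def field_simps)
      moreover have "\<forall>p\<in>P. \<not> p dvd m" using n m by (auto simp: A_def)
      ultimately show ?thesis by (simp add: A_def)
    qed
    thus "n \<in> (\<lambda>m. q * m) ` A (x / q)" using m by blast
  next
    fix n assume "n \<in> (\<lambda>m. q * m) ` A (x / q)"
    then obtain m where m: "n = q * m" "m \<in> A (x/q)" by auto
    have "\<not> p dvd q * m" if "p \<in> P" for p
    proof
      assume "p dvd q * m"
      hence "p dvd q \<or> p dvd m" using assms that prime_dvd_mult_iff by blast
      moreover have "\<not> p dvd q" using assms that
        by (metis primes_dvd_imp_eq)
      ultimately show False using m that by (auto simp: A_def)
    qed
    moreover have "real (q*m) \<le> x" using m qpos by (auto simp: A_def field_simps)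
    moreover have "1 \<le> q * m" using m qpos by (auto simp: A_def)
    ultimately show "n \<in> {n \<in> A x. q dvd n}" using m by (auto simp: A_def)
  qed
  have "{n::nat. 1 \<le> n \<and> real n \<le> x \<and> (\<forall>p\<in>insert q P. \<not> p dvd n)} = A x - {n \<in> A x. q dvd n}"
    by (auto simp: A_def)
  hence "sieve_count x (insert q P) = card (A x) - card {n \<in> A x. q dvd n}"
    by (simp add: sieve_count_def card_Diff_subset finA)
  also have "card {n \<in> A x. q dvd n} = card (A (x/q))"
    unfolding B by (rule card_image) (use qpos in \<open>auto simp: inj_on_def\<close>)
  finally show ?thesis by (simp add: sieve_count_def A_def)
qed

lemma sieve_err:
  assumes "finite P"
  shows "(\<forall>p\<in>P. prime p) \<Longrightarrow> x \<ge> 0 \<Longrightarrow>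
    \<bar>real (sieve_count x P) - x * (\<Prod>p\<in>P. 1 - 1 / real p)\<bar> \<le> 2 ^ card P"
  using assms
proof (induction P arbitrary: x rule: finite_induct)
  case empty thus ?case using base_count by simp
next
  case (insert q P)
  have q: "prime q" using insert by auto
  hence qpos: "real q > 0" by (simp add: prime_gt_0_nat)
  have le: "sieve_count (x/q) P \<le> sieve_count x P"
    unfolding sieve_count_def
  proof (rule card_mono)
    show "finite {n::nat. 1 \<le> n \<and> real n \<le> x \<and> (\<forall>p\<in>P. \<not> p dvd n)}"
      by (rule finite_subset[of _ "{..nat \<lfloor>x\<rfloor>}"]) (auto simp: le_nat_floor)
    have q1: "real q \<ge> 1" using prime_gt_0_nat[OF q] by simp
    have "real n \<le> x" if "real n \<le> x / real q" for n :: nat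
    proof -
      have "real n * 1 \<le> real n * real q" using q1 by (intro mult_left_mono) auto
      thus ?thesis using that qpos by (simp add: field_simps)
    qed
    thus "{n::nat. 1 \<le> n \<and> real n \<le> x / real q \<and> (\<forall>p\<in>P. \<not> p dvd n)} \<subseteq> {n. 1 \<le> n \<and> real n \<le> x \<and> (\<forall>p\<in>P. \<not> p dvd n)}"
      by auto
  qed
  have e: "real (sieve_count x (insert q P)) = real (sieve_count x P) - real (sieve_count (x/q) P)"
    using step_count[of P q x] insert le by (simp add: of_nat_diff)
  have i1: "\<bar>real (sieve_count x P) - x * (\<Prod>p\<in>P. 1 - 1 / real p)\<bar> \<le> 2 ^ card P"
    using insert by auto
  have i2: "\<bar>real (sieve_count (x/q) P) - (x/q) * (\<Prod>p\<in>P. 1 - 1 / real p)\<bar> \<le> 2 ^ card P"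
    by (rule insert.IH) (use insert.prems qpos in auto)
  have "x * (\<Prod>p\<in>insert q P. 1 - 1 / real p) = x * (\<Prod>p\<in>P. 1 - 1 / real p) - (x/q) * (\<Prod>p\<in>P. 1 - 1 / real p)"
    using insert qpos by (simp add: algebra_simps)
  hence eq: "x * (\<Prod>p\<in>insert q P. 1 - 1 / real p) = x * (\<Prod>p\<in>P. 1 - 1 / real p) - (x/q) * (\<Prod>p\<in>P. 1 - 1 / real p)" .
  have c: "(2::real) ^ card (insert q P) = 2 * 2 ^ card P" using insert by simp
  show ?case unfolding eq e c using i1 i2 by (simp only: abs_le_iff) linarith
qed

lemma telescope: "m \<ge> 1 \<Longrightarrow> (\<Prod>k\<in>{2..m}. 1 - 1 / real k) = 1 / real m"
proof (induction m rule: dec_induct)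
  case base thus ?case by simp
next
  case (step m)
  have "{2..Suc m} = insert (Suc m) {2..m}" using step by auto
  thus ?case using step by (simp add: field_simps)
qed

lemma l2: "ln (2::real) \<le> 3/4"
proof -
  have "1 + 3/4 + (3/4)^2/2 \<le> exp (3/4::real)" by (rule exp_lower_Taylor_quadratic) simp
  hence "2 \<le> exp (3/4::real)" by (simp add: power2_eq_square)
  thus ?thesis by (metis ln_exp ln_le_cancel_iff exp_gt_zero zero_less_numeral)
qed

lemma pw: "x \<ge> 1 \<Longrightarrow> 2 powr ln x \<le> (x::real) powr (3/4)"
proof -
  assume x: "x \<ge> 1"
  have "2 powr ln x = exp (ln x * ln 2)" by (simp add: powr_def)
  also have "ln x * ln 2 \<le> ln x * (3/4)" using l2 ln_ge_zero[OF x] by (rule mult_left_mono)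
  hence "exp (ln x * ln 2) \<le> exp (3/4 * ln x)" by (simp add: mult.commute)
  also have "exp (3/4 * ln x) = x powr (3/4)" using x by (simp add: powr_def)
  finally show ?thesis .
qed

lemma asym: "\<epsilon> > 0 \<Longrightarrow> \<forall>\<^sub>F x in at_top. 2 * 2 powr ln x * (ln x + 1) \<le> \<epsilon> * (x::real)"
proof -
  assume e: "\<epsilon> > 0"
  have "(\<lambda>x::real. 2 * x powr (3/4) * (ln x + 1)) \<in> o(\<lambda>x. x)" by real_asymp
  hence "\<forall>\<^sub>F x in at_top. norm (2 * x powr (3/4) * (ln x + 1)) \<le> \<epsilon> * norm (x::real)"
    using e landau_o.smallD by blast
  moreover have "\<forall>\<^sub>F x in at_top. (x::real) \<ge> 1" by (rule eventually_ge_at_top)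
  ultimately show ?thesis
  proof eventually_elim
    case (elim x)
    have "2 * 2 powr ln x * (ln x + 1) \<le> 2 * x powr (3/4) * (ln x + 1)"
      using pw[OF elim(2)] ln_ge_zero[OF elim(2)] by (intro mult_right_mono) auto
    also have "\<dots> \<le> \<epsilon> * x" using elim ln_ge_zero[OF elim(2)] by simp
    finally show ?case .
  qed
qed

lemma prod_sub:
  assumes "P \<subseteq> {2..m}"
  shows "(\<Prod>k\<in>{2..m}. 1 - 1 / real k) \<le> (\<Prod>p\<in>P. 1 - 1 / real p)"
proof -
  have f: "finite P" using assms finite_subset by blast
  have "(\<Prod>k\<in>{2..m}. 1 - 1 / real k) = (\<Prod>k\<in>P. 1 - 1 / real k) * (\<Prod>k\<in>{2..m}-P. 1 - 1 / real k)"
    using assms by (simp add: prod.subset_diff)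
  also have "\<dots> \<le> (\<Prod>k\<in>P. 1 - 1 / real k) * 1"
  proof (rule mult_left_mono)
    show "(\<Prod>k\<in>{2..m}-P. 1 - 1 / real k) \<le> 1" by (rule prod_le_1) auto
    show "0 \<le> (\<Prod>k\<in>P. 1 - 1 / real k)" using assms by (intro prod_nonneg) auto
  qed
  finally show ?thesis by simp
qed

theorem corollary3p8:
  shows "\<forall>\<epsilon>>0. \<forall>\<^sub>F x in at_top. \<forall>P :: nat set.
           (\<forall>p\<in>P. prime p \<and> real p < ln x) \<longrightarrow>
           real (sieve_count x P) \<le> (1 + \<epsilon>) * x * exp (- (\<Sum>p\<in>P. 1 / real p))"
proof (intro allI impI)
  fix \<epsilon> :: real assume e: "\<epsilon> > 0"
  have ev: "\<forall>\<^sub>F x in at_top. ln x \<ge> (1::real)"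
    by real_asymp
  show "\<forall>\<^sub>F x in at_top. \<forall>P :: nat set.
           (\<forall>p\<in>P. prime p \<and> real p < ln x) \<longrightarrow>
           real (sieve_count x P) \<le> (1 + \<epsilon>) * x * exp (- (\<Sum>p\<in>P. 1 / real p))"
    using ev asym[OF e] eventually_ge_at_top[of 1]
  proof eventually_elim
    case (elim x)
    show ?case
    proof (intro allI impI)
      fix P :: "nat set" assume hP: "\<forall>p\<in>P. prime p \<and> real p < ln x"
      define m where "m = nat \<lceil>ln x\<rceil>"
      have "ln x \<le> of_int \<lceil>ln x\<rceil>" by (rule le_of_int_ceiling)
      hence "1 \<le> \<lceil>ln x\<rceil>" using elim by linarith
      hence m1: "m \<ge> 1" unfolding m_def using le_nat_iff[of "\<lceil>ln x\<rceil>" 1] by simp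
      have c1: "0 \<le> \<lceil>ln x\<rceil>" using \<open>1 \<le> \<lceil>ln x\<rceil>\<close> by simp
      have "real m = of_int \<lceil>ln x\<rceil>" unfolding m_def using c1 by simp
      moreover have "of_int \<lceil>ln x\<rceil> < ln x + 1" by linarith
      ultimately have mle: "real m < ln x + 1" by simp
      have sub: "P \<subseteq> {2..m}"
      proof
        fix p assume "p \<in> P"
        hence "prime p" "real p < ln x" using hP by auto
        thus "p \<in> {2..m}" unfolding m_def using prime_ge_2_nat by (auto simp: le_nat_iff) linarith
      qed
      have fin: "finite P" using sub finite_subset by blast
      have cardP: "real (card P) \<le> ln x"
      proof -
        have "card P \<le> card {2..m}" using sub by (rule card_mono[rotated]) simp
        thus ?thesis using mle m1 by simp
      qed
      have pow: "(2::real) ^ card P \<le> 2 powr ln x"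
        using cardP by (simp add: powr_realpow[symmetric])
      define \<Pi> where "\<Pi> = (\<Prod>p\<in>P. 1 - 1 / real p)"
      define E where "E = exp (- (\<Sum>p\<in>P. 1 / real p))"
      have PiE: "\<Pi> \<le> E"
      proof -
        have "E = (\<Prod>p\<in>P. exp (- (1 / real p)))"
          unfolding E_def by (simp add: exp_sum[symmetric] fin sum_negf)
        moreover have "\<Pi> \<le> (\<Prod>p\<in>P. exp (- (1 / real p)))"
          unfolding \<Pi>_def
        proof (rule prod_mono)
          fix p assume "p \<in> P"
          hence "p \<ge> 2" using sub by auto
          thus "0 \<le> 1 - 1 / real p \<and> 1 - 1 / real p \<le> exp (- (1 / real p))"
            using exp_ge_add_one_self[of "- (1 / real p)"] by simp
        qed
        ultimately show ?thesis by simp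
      qed
      have Pilow: "\<Pi> \<ge> 1 / (ln x + 1)"
      proof -
        have "1 / (ln x + 1) \<le> 1 / real m" using m1 mle by (intro divide_left_mono) auto
        also have "\<dots> = (\<Prod>k\<in>{2..m}. 1 - 1 / real k)" using telescope m1 by simp
        also have "\<dots> \<le> \<Pi>" unfolding \<Pi>_def by (rule prod_sub[OF sub])
        finally show ?thesis .
      qed
      have x0: "x \<ge> 0" using elim by simp
      have S: "real (sieve_count x P) \<le> x * \<Pi> + 2 ^ card P"
        using sieve_err[OF fin, of x] hP x0 unfolding \<Pi>_def by auto
      have lp: "0 < ln x + 1" using elim by simp
      have "2 powr ln x \<le> \<epsilon> * x / (ln x + 1)"
      proof -
        have a0: "0 \<le> 2 powr ln x * (ln x + 1)" using lp by simp
        have "2 * (2 powr ln x * (ln x + 1)) \<le> \<epsilon> * x" using elim(2) by (simp add: mult.assoc)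
        hence "2 powr ln x * (ln x + 1) \<le> \<epsilon> * x" using a0 by linarith
        thus ?thesis using lp by (simp add: pos_le_divide_eq)
      qed
      also have "\<dots> = \<epsilon> * x * (1 / (ln x + 1))" by simp
      also have "\<dots> \<le> \<epsilon> * x * E"
        using Pilow PiE e x0 by (intro mult_left_mono) auto
      finally have err: "2 powr ln x \<le> \<epsilon> * x * E" .
      have "x * \<Pi> \<le> x * E" using PiE x0 by (rule mult_left_mono)
      hence "real (sieve_count x P) \<le> x * E + \<epsilon> * x * E" using S pow err by linarith
      thus "real (sieve_count x P) \<le> (1 + \<epsilon>) * x * exp (- (\<Sum>p\<in>P. 1 / real p))"
        unfolding E_def by (simp add: algebra_simps)
    qed
  qed
qed

end
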